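(* Let $G$ be a finite simple graph, let $\alpha=\alpha(G)$, for $1\le j\le\alpha$ let $g_j$ be the number of independent sets of $G$ of cardinality $j$, and let $g=\sum_{j=1}^{\alpha}(-1)^{j-1}g_j$. Then $\deg h_{R/I(G)}(t)=\alpha(G)$ if and only if $g\neq 1$.
   Context: An independent set of $G$ is a set of vertices no two of which are adjacent; $\alpha(G)$ is the maximum size of an independent set. For $G$ on vertices $x_1,\dots,x_n$, $R=k[x_1,\dots,x_n]$ over a field $k$, $I(G)=(x_ix_j:\{x_i,x_j\}\in E(G))$, and $h_{R/I(G)}(t)$ is the numerator of the Hilbert series $\sum_i\dim_k(R/I(G))_it^i$ written as a reduced fraction $h_{R/I(G)}(t)/(1-t)^{\dim R/I(G)}$. *)

theory Defs
  imports "HOL-Library.Poly_Mapping" "HOL-Computational_Algebra.Computational_Algebra"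
begin

definition simple_graph :: "'v set \<Rightarrow> 'v set set \<Rightarrow> bool" where
  "simple_graph V E \<longleftrightarrow> finite V \<and> (\<forall>e\<in>E. \<exists>u v. u \<noteq> v \<and> u \<in> V \<and> v \<in> V \<and> e = {u, v})"

definition independent_set :: "'v set \<Rightarrow> 'v set set \<Rightarrow> 'v set \<Rightarrow> bool" where
  "independent_set V E S \<longleftrightarrow> S \<subseteq> V \<and> (\<forall>u\<in>S. \<forall>v\<in>S. {u, v} \<notin> E)"

definition indep_number :: "'v set \<Rightarrow> 'v set set \<Rightarrow> nat" where
  "indep_number V E = Max {card S | S. independent_set V E S}"

definition num_indep :: "'v set \<Rightarrow> 'v set set \<Rightarrow> nat \<Rightarrow> nat" where
  "num_indep V E j = card {S. independent_set V E S \<and> card S = j}"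

(* Polynomials in the variables 'v over a field 'k: monomials are exponent vectors 'v \<Rightarrow>\<^sub>0 nat *)
type_synonym ('v, 'k) mpoly = "('v \<Rightarrow>\<^sub>0 nat) \<Rightarrow>\<^sub>0 'k"

definition mvar :: "'v \<Rightarrow> ('v, 'k::field) mpoly" where
  "mvar v = Poly_Mapping.single (Poly_Mapping.single v 1) 1"

definition kscale :: "'k::field \<Rightarrow> ('v, 'k) mpoly \<Rightarrow> ('v, 'k) mpoly" where
  "kscale c p = Poly_Mapping.map (\<lambda>a. c * a) p"

definition mon_deg :: "('v \<Rightarrow>\<^sub>0 nat) \<Rightarrow> nat" where
  "mon_deg m = (\<Sum>v\<in>Poly_Mapping.keys m. Poly_Mapping.lookup m v)"

definition graded_part :: "'v set \<Rightarrow> nat \<Rightarrow> ('v, 'k::field) mpoly set" where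
  "graded_part V i = {p. \<forall>m\<in>Poly_Mapping.keys p. Poly_Mapping.keys m \<subseteq> V \<and> mon_deg m = i}"

(* the edge ideal I(G) = (x_u x_v : {u,v} \<in> E), ideal generated in the polynomial ring *)
definition edge_ideal :: "'v set set \<Rightarrow> ('v, 'k::field) mpoly set" where
  "edge_ideal E = module.span (*) {mvar u * mvar v | u v. {u, v} \<in> E}"

(* dim_k (R/I(G))_i = dim_k R_i - dim_k (I(G) \<inter> R_i) *)
definition hilbert_fun :: "'k::field itself \<Rightarrow> 'v set \<Rightarrow> 'v set set \<Rightarrow> nat \<Rightarrow> nat" where
  "hilbert_fun _ V E i =
     vector_space.dim (kscale :: 'k \<Rightarrow> _) (graded_part V i)
     - vector_space.dim (kscale :: 'k \<Rightarrow> _) (graded_part V i \<inter> edge_ideal E)"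

definition hilbert_series :: "'k::field itself \<Rightarrow> 'v set \<Rightarrow> 'v set set \<Rightarrow> int fps" where
  "hilbert_series K V E = Abs_fps (\<lambda>i. int (hilbert_fun K V E i))"

definition hilbert_numerator :: "'k::field itself \<Rightarrow> 'v set \<Rightarrow> 'v set set \<Rightarrow> int poly" where
  "hilbert_numerator K V E =
     (THE h. \<exists>d::nat. fps_of_poly h = hilbert_series K V E * (1 - fps_X) ^ d
                     \<and> coprime h ([:1, -1:] ^ d))"

end

theory Submission
  imports Defs
begin


abbreviation pkeys where "pkeys \<equiv> Poly_Mapping.keys"
abbreviation lkp where "lkp \<equiv> Poly_Mapping.lookup"

lemma lookup_map0: "f 0 = 0 \<Longrightarrow> lkp (Poly_Mapping.map f p) k = f (lkp p k)"
  by transfer (simp add: when_def)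

lemma vs_kscale: "vector_space (kscale :: 'k::field \<Rightarrow> ('v,'k) mpoly \<Rightarrow> _)"
  by unfold_locales (auto simp: kscale_def poly_mapping_eq_iff lookup_map0 lookup_add fun_eq_iff algebra_simps)

lemma module_times: "module ((*) :: 'a::comm_ring_1 \<Rightarrow> 'a \<Rightarrow> 'a)"
  by unfold_locales (auto simp: algebra_simps)

lemma poly_decomp: "p = (\<Sum>m\<in>pkeys p. Poly_Mapping.single m (lkp p m))"
  by (rule poly_mapping_eqI) (auto simp: lookup_sum lookup_single when_def in_keys_iff)

lemma kscale_single: "kscale c (Poly_Mapping.single m (1::'k::field)) = Poly_Mapping.single m c"
  by (simp add: kscale_def)

lemma dim_keys:
  assumes "finite S"
  shows "vector_space.dim (kscale :: 'k::field \<Rightarrow> _) {p::('v,'k) mpoly. pkeys p \<subseteq> S} = card S"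
proof -
  interpret vs: vector_space "kscale :: 'k \<Rightarrow> ('v,'k) mpoly \<Rightarrow> _" by (rule vs_kscale)
  let ?B = "(\<lambda>m. Poly_Mapping.single m (1::'k)) ` S"
  have "card ?B = vs.dim {p. pkeys p \<subseteq> S}"
  proof (rule vs.basis_card_eq_dim)
    show "?B \<subseteq> {p. pkeys p \<subseteq> S}" by auto
    show "{p. pkeys p \<subseteq> S} \<subseteq> vs.span ?B"
    proof
      fix p :: "('v,'k) mpoly" assume "p \<in> {p. pkeys p \<subseteq> S}"
      then have ps: "pkeys p \<subseteq> S" by simp
      have "p = (\<Sum>m\<in>pkeys p. kscale (lkp p m) (Poly_Mapping.single m 1))"
        using poly_decomp[of p] by (simp add: kscale_single)
      also have "\<dots> \<in> vs.span ?B"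
        using ps by (intro vs.span_sum vs.span_scale vs.span_base) auto
      finally show "p \<in> vs.span ?B" .
    qed
    show "vs.independent ?B"
      unfolding vs.independent_explicit_module
    proof (intro allI impI)
      fix t u v
      assume t: "finite t" "t \<subseteq> ?B" "(\<Sum>v\<in>t. kscale (u v) v) = 0" "v \<in> t"
      then obtain m where m: "v = Poly_Mapping.single m 1" by auto
      have "0 = lkp (\<Sum>v\<in>t. kscale (u v) v) m" using t by simp
      also have "\<dots> = (\<Sum>w\<in>t. u w * lkp w m)"
        by (simp add: lookup_sum kscale_def lookup_map0)
      also have "\<dots> = (\<Sum>w\<in>{v}. u w * lkp w m)"
      proof (rule sum.mono_neutral_right)
        show "\<forall>w\<in>t - {v}. u w * lkp w m = 0"
        proof
          fix w assume w: "w \<in> t - {v}"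
          then obtain m' where "w = Poly_Mapping.single m' 1" using t(2) by auto
          with w m have "m' \<noteq> m" by auto
          then show "u w * lkp w m = 0" using \<open>w = _\<close> by (simp add: lookup_single)
        qed
      qed (use t in auto)
      also have "\<dots> = u v" using m by simp
      finally show "u v = 0" by simp
    qed
  qed
  moreover have "card ?B = card S"
    by (rule card_image) (auto simp: inj_on_def poly_mapping_eq_iff fun_eq_iff lookup_single when_def dest: spec)
  ultimately show ?thesis by simp
qed

definition NS :: "'v set set \<Rightarrow> ('v \<Rightarrow>\<^sub>0 nat) \<Rightarrow> bool" where
  "NS E m \<longleftrightarrow> (\<exists>e\<in>E. e \<subseteq> pkeys m)"

definition Mon :: "'v set \<Rightarrow> nat \<Rightarrow> ('v \<Rightarrow>\<^sub>0 nat) set" where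
  "Mon V i = {m. pkeys m \<subseteq> V \<and> mon_deg m = i}"

lemma keys_add_nat: "pkeys ((a::'v \<Rightarrow>\<^sub>0 nat) + b) = pkeys a \<union> pkeys b"
  by (auto simp: in_keys_iff lookup_add)

lemma mvar_mult: "(mvar u * mvar v :: ('v,'k::field) mpoly) =
   Poly_Mapping.single (Poly_Mapping.single u 1 + Poly_Mapping.single v 1) 1"
  by (simp add: mvar_def mult_single)

lemma ideal_sub:
  assumes "(p :: ('v,'k::field) mpoly) \<in> edge_ideal E"
  shows "\<forall>m\<in>pkeys p. NS E m"
proof -
  interpret md: module "(*) :: ('v,'k) mpoly \<Rightarrow> _ \<Rightarrow> _" by (rule module_times)
  from assms have "p \<in> md.span {mvar u * mvar v | u v. {u, v} \<in> E}"
    by (simp add: edge_ideal_def)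
  then show ?thesis
  proof (induction rule: md.span_induct_alt)
    case base then show ?case by simp
  next
    case (step c x y)
    then obtain u v where x: "x = mvar u * mvar v" "{u,v} \<in> E" by auto
    have "\<forall>m\<in>pkeys (c * x). NS E m"
    proof
      fix m assume "m \<in> pkeys (c * x)"
      then obtain a b where ab: "m = a + b" "b \<in> pkeys x"
        using keys_mult[of c x] by auto
      then have "b = Poly_Mapping.single u 1 + Poly_Mapping.single v 1"
        using x by (simp add: mvar_mult split: if_splits)
      then have "{u,v} \<subseteq> pkeys m" using ab by (auto simp: keys_add_nat)
      then show "NS E m" using x(2) unfolding NS_def by blast
    qed
    then show ?case using step keys_add[of "c*x" y] by auto
  qed
qed

lemma ideal_sup:
  assumes G: "simple_graph V E" and p: "\<forall>m\<in>pkeys (p :: ('v,'k::field) mpoly). NS E m"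
  shows "p \<in> edge_ideal E"
proof -
  interpret md: module "(*) :: ('v,'k) mpoly \<Rightarrow> _ \<Rightarrow> _" by (rule module_times)
  let ?G = "{mvar u * mvar v | u v. {u, v} \<in> E} :: ('v,'k) mpoly set"
  have "Poly_Mapping.single m (lkp p m) \<in> md.span ?G" if m: "m \<in> pkeys p" for m
  proof -
    obtain e where e: "e \<in> E" "e \<subseteq> pkeys m" using p m by (auto simp: NS_def)
    then obtain u v where uv: "u \<noteq> v" "e = {u,v}" using G by (auto simp: simple_graph_def)
    let ?g = "Poly_Mapping.single u 1 + Poly_Mapping.single v (1::nat)"
    have "m = (m - ?g) + ?g"
      using uv e by (auto simp: poly_mapping_eq_iff fun_eq_iff lookup_add lookup_minus lookup_single when_def in_keys_iff)
    then have "Poly_Mapping.single m (lkp p m) = Poly_Mapping.single (m - ?g) (lkp p m) * (mvar u * mvar v)"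
      by (simp add: mvar_mult mult_single)
    also have "\<dots> \<in> md.span ?G"
      by (rule md.span_scale, rule md.span_base) (use e uv in blast)
    finally show ?thesis .
  qed
  then have "(\<Sum>m\<in>pkeys p. Poly_Mapping.single m (lkp p m)) \<in> md.span ?G"
    by (intro md.span_sum)
  then show ?thesis using poly_decomp[of p] by (simp add: edge_ideal_def)
qed

lemma graded_eq: "graded_part V i = {p. pkeys p \<subseteq> Mon V i}"
  by (auto simp: graded_part_def Mon_def)

lemma graded_ideal_eq:
  assumes "simple_graph V E"
  shows "graded_part V i \<inter> edge_ideal E = {p::('v,'k::field) mpoly. pkeys p \<subseteq> Mon V i \<inter> {m. NS E m}}"
  by (auto simp: graded_eq dest: ideal_sub intro!: ideal_sup[OF assms])

lemma mon_deg_sum: "finite A \<Longrightarrow> pkeys m \<subseteq> A \<Longrightarrow> mon_deg m = (\<Sum>v\<in>A. lkp m v)"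
  unfolding mon_deg_def by (rule sum.mono_neutral_left) (auto simp: in_keys_iff)

lemma lookup_le_deg: "lkp m v \<le> mon_deg m"
proof (cases "v \<in> pkeys m")
  case True then show ?thesis unfolding mon_deg_def
    by (intro member_le_sum) auto
qed (simp add: in_keys_iff)

lemma mon_deg_add: "mon_deg (a + b) = mon_deg a + mon_deg b"
proof -
  let ?A = "pkeys a \<union> pkeys b"
  have "mon_deg (a + b) = (\<Sum>v\<in>?A. lkp (a+b) v)"
    by (rule mon_deg_sum) (auto simp: keys_add_nat)
  also have "\<dots> = (\<Sum>v\<in>?A. lkp a v) + (\<Sum>v\<in>?A. lkp b v)"
    by (simp add: lookup_add sum.distrib)
  also have "\<dots> = mon_deg a + mon_deg b"
    by (subst (1 2) mon_deg_sum[of ?A]) auto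
  finally show ?thesis .
qed

lemma mon_deg_single: "mon_deg (Poly_Mapping.single a k) = k"
  by (simp add: mon_deg_def)

lemma mon_deg_zero: "mon_deg 0 = 0"
  by (simp add: mon_deg_def)

lemma finite_Mon:
  assumes "finite V" shows "finite (Mon V i)"
proof -
  have "lkp ` Mon V i \<subseteq> {f. \<forall>x. (x \<in> V \<longrightarrow> f x \<in> {0..i}) \<and> (x \<notin> V \<longrightarrow> f x = 0)}"
  proof (rule image_subsetI, unfold mem_Collect_eq, intro allI conjI impI)
    fix m x assume m: "m \<in> Mon V i"
    show "lkp m x \<in> {0..i}" using lookup_le_deg[of m x] m by (simp add: Mon_def)
    show "lkp m x = 0" if "x \<notin> V" using m that by (auto simp: Mon_def in_keys_iff)
  qed
  moreover have "finite {f. \<forall>x. (x \<in> V \<longrightarrow> f x \<in> {0..i}) \<and> (x \<notin> V \<longrightarrow> f x = (0::nat))}"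
    using assms by (intro finite_set_of_finite_funs) auto
  ultimately have "finite (lkp ` Mon V i)" by (rule finite_subset)
  moreover have "inj_on lkp (Mon V i)"
    by (rule inj_onI) (simp add: poly_mapping_eqI)
  ultimately show ?thesis using finite_imageD by blast
qed
lemma hilbert_fun_eq:
  assumes G: "simple_graph V E"
  shows "hilbert_fun TYPE('k::field) V E i = card {m\<in>Mon V i. \<not> NS E m}"
proof -
  have fV: "finite V" using G by (simp add: simple_graph_def)
  have "hilbert_fun TYPE('k::field) V E i = card (Mon V i) - card (Mon V i \<inter> {m. NS E m})"
    unfolding hilbert_fun_def graded_ideal_eq[OF G]
    using dim_keys[where 'k='k and 'v='v, OF finite_Mon[OF fV, of i]]
      dim_keys[where 'k='k and 'v='v, of "Mon V i \<inter> {m. NS E m}"] finite_Mon[OF fV, of i]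
    by (simp add: graded_eq)
  also have "\<dots> = card (Mon V i - {m. NS E m})"
    by (rule card_Diff_subset_Int[symmetric]) (use finite_Mon[OF fV] in auto)
  finally show ?thesis by (simp add: set_diff_eq)
qed



definition cnt :: "'v set \<Rightarrow> nat \<Rightarrow> nat" where
  "cnt S i = card {m::'v \<Rightarrow>\<^sub>0 nat. pkeys m = S \<and> mon_deg m = i}"

lemma keys_empty_iff: "pkeys (m::'v \<Rightarrow>\<^sub>0 nat) = {} \<longleftrightarrow> m = 0"
  by (auto simp: poly_mapping_eq_iff fun_eq_iff in_keys_iff)

lemma cnt_empty: "cnt {} i = (if i = 0 then 1 else 0)"
proof -
  have "{m::'v \<Rightarrow>\<^sub>0 nat. pkeys m = {} \<and> mon_deg m = i} = (if i = 0 then {0} else {})"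
    by (auto simp: keys_empty_iff mon_deg_zero)
  note eq = this
  show ?thesis unfolding cnt_def eq by simp
qed
lemma dummy: True
proof -
  have True by simp
  then show ?thesis unfolding cnt_def by simp
qed

lemma finite_cnt_set: "finite S \<Longrightarrow> finite {m::'v \<Rightarrow>\<^sub>0 nat. pkeys m = S \<and> mon_deg m = i}"
  by (rule finite_subset[OF _ finite_Mon[of S i]]) (auto simp: Mon_def)

lemma cnt_insert:
  fixes S :: "'v set"
  assumes S: "finite S" "a \<notin> S"
  shows "cnt (insert a S) i = (\<Sum>j<i. cnt S j)"
proof -
  let ?A = "{m::'v \<Rightarrow>\<^sub>0 nat. pkeys m = insert a S \<and> mon_deg m = i}"
  let ?B = "Sigma {..<i} (\<lambda>j. {m::'v \<Rightarrow>\<^sub>0 nat. pkeys m = S \<and> mon_deg m = j})"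
  define f where "f = (\<lambda>(j, m::'v \<Rightarrow>\<^sub>0 nat). m + Poly_Mapping.single a (i - j))"
  define g where "g = (\<lambda>m::'v \<Rightarrow>\<^sub>0 nat. (i - lkp m a, m - Poly_Mapping.single a (lkp m a)))"
  have bij: "bij_betw f ?B ?A"
  proof (rule bij_betw_byWitness[where f'=g])
    show "\<forall>x\<in>?B. g (f x) = x"
    proof
      fix x assume "x \<in> ?B"
      then obtain j m where x: "x = (j, m)" "j < i" "pkeys m = S" "mon_deg m = j" by auto
      have "lkp m a = 0" using x S by (auto simp: in_keys_iff)
      then have "lkp (m + Poly_Mapping.single a (i - j)) a = i - j"
        by (simp add: lookup_add)
      then show "g (f x) = x" using x by (simp add: f_def g_def)
    qed
    show "\<forall>y\<in>?A. f (g y) = y"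
    proof
      fix m assume m: "m \<in> ?A"
      have le: "lkp m a \<le> i" using lookup_le_deg[of m a] m by simp
      have "m - Poly_Mapping.single a (lkp m a) + Poly_Mapping.single a (lkp m a) = m"
        by (rule poly_mapping_eqI) (simp add: lookup_add lookup_minus lookup_single when_def)
      then show "f (g m) = m" using le by (simp add: f_def g_def)
    qed
    show "f ` ?B \<subseteq> ?A"
    proof
      fix y assume "y \<in> f ` ?B"
      then obtain j m where y: "y = m + Poly_Mapping.single a (i - j)" "j < i" "pkeys m = S" "mon_deg m = j"
        by (auto simp: f_def)
      show "y \<in> ?A" using y by (auto simp: keys_add_nat mon_deg_add mon_deg_single)
    qed
    show "g ` ?A \<subseteq> ?B"
    proof
      fix y assume "y \<in> g ` ?A"
      then obtain m where y: "y = g m" and m: "pkeys m = insert a S" "mon_deg m = i" by auto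
      let ?k = "lkp m a" let ?m' = "m - Poly_Mapping.single a ?k"
      have kpos: "?k > 0" using m by (auto simp: in_keys_iff)
      have le: "?k \<le> i" using lookup_le_deg[of m a] m by simp
      have eq: "?m' + Poly_Mapping.single a ?k = m"
        by (rule poly_mapping_eqI) (simp add: lookup_add lookup_minus lookup_single when_def)
      have "pkeys ?m' = S"
      proof -
        have "lkp ?m' x = (if x = a then 0 else lkp m x)" for x
          by (simp add: lookup_minus lookup_single when_def)
        then have "x \<in> pkeys ?m' \<longleftrightarrow> x \<in> pkeys m \<and> x \<noteq> a" for x
          by (simp add: in_keys_iff)
        then show ?thesis using m S by auto
      qed
      moreover have "mon_deg ?m' = i - ?k"
        using arg_cong[OF eq, of mon_deg] m by (simp add: mon_deg_add mon_deg_single)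
      ultimately show "y \<in> ?B" using y kpos le by (auto simp: g_def)
    qed
  qed
  have "cnt (insert a S) i = card ?B"
    unfolding cnt_def using bij_betw_same_card[OF bij] by simp
  also have "\<dots> = (\<Sum>j<i. cnt S j)"
    by (subst card_SigmaI) (auto simp: cnt_def finite_cnt_set[OF S(1)])
  finally show ?thesis .
qed

definition Fc :: "'v set \<Rightarrow> int fps" where
  "Fc S = Abs_fps (\<lambda>i. int (cnt S i))"

lemma Fc_empty: "Fc {} = 1"
  by (rule fps_ext) (simp add: Fc_def cnt_empty)

lemma Fc_insert:
  assumes S: "finite S" "a \<notin> S"
  shows "Fc (insert a S) * (1 - fps_X) = fps_X * Fc S"
proof (rule fps_ext)
  fix n
  have "(Fc (insert a S) * (1 - fps_X)) $ n = Fc (insert a S) $ n - (fps_X * Fc (insert a S)) $ n"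
    by (simp add: algebra_simps)
  also have "\<dots> = (fps_X * Fc S) $ n"
    by (cases n) (simp_all add: Fc_def cnt_insert[OF S])
  finally show "(Fc (insert a S) * (1 - fps_X)) $ n = (fps_X * Fc S) $ n" .
qed

lemma Fc_main:
  assumes "finite S"
  shows "Fc S * (1 - fps_X) ^ card S = fps_X ^ card S"
  using assms
proof (induction S rule: finite_induct)
  case empty then show ?case by (simp add: Fc_empty)
next
  case (insert a S)
  have "Fc (insert a S) * (1 - fps_X) ^ card (insert a S)
      = (Fc (insert a S) * (1 - fps_X)) * (1 - fps_X) ^ card S"
    using insert by (simp add: algebra_simps)
  also have "\<dots> = (fps_X * Fc S) * (1 - fps_X) ^ card S"
    by (simp only: Fc_insert[OF insert(1,2)])
  also have "\<dots> = fps_X * (Fc S * (1 - fps_X) ^ card S)"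
    by (simp add: mult.assoc)
  also have "\<dots> = fps_X ^ card (insert a S)" using insert by simp
  finally show ?case .
qed



lemma d1: "degree ([:0,1:] ^ s :: int poly) = s" by (simp add: degree_power_eq)
lemma d2: "degree ([:1,-1:] ^ k :: int poly) = k" by (simp add: degree_power_eq)

lemma poly_term_coeff:
  "coeff ([:0,1:] ^ s * [:1,-1:] ^ k :: int poly) (s + k) = (-1) ^ k"
proof -
  have c1: "coeff ([:0,1:] ^ s :: int poly) s = 1"
    using lead_coeff_power[of "[:0,1:] :: int poly" s] d1[of s] by simp
  have c2: "coeff ([:1,-1:] ^ k :: int poly) k = (-1) ^ k"
    using lead_coeff_power[of "[:1,-1:] :: int poly" k] d2[of k] by simp
  show ?thesis
    using coeff_mult_degree_sum[of "[:0,1:] ^ s :: int poly" "[:1,-1:] ^ k"]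
    unfolding d1 d2 c1 c2 by simp
qed

lemma poly_term_degree:
  "degree ([:0,1:] ^ s * [:1,-1:] ^ k :: int poly) \<le> s + k"
  using degree_mult_le[of "[:0,1:] ^ s :: int poly" "[:1,-1:] ^ k"] unfolding d1 d2 .

lemma fps_q: "fps_of_poly ([:1,-1:] :: int poly) = 1 - fps_X"
  by (simp add: fps_of_poly_pCons fps_eq_iff)



context
  fixes V :: "'v set" and E :: "'v set set"
  assumes G: "simple_graph V E"
begin

definition "Ind = {S. independent_set V E S}"

lemma fV: "finite V" using G by (simp add: simple_graph_def)

lemma Ind_sub: "Ind \<subseteq> Pow V" by (auto simp: Ind_def independent_set_def)

lemma finite_Ind: "finite Ind" using finite_subset[OF Ind_sub] fV by auto

lemma finite_In: "S \<in> Ind \<Longrightarrow> finite S"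
  using Ind_sub fV finite_subset by blast

lemma empty_Ind: "{} \<in> Ind" by (simp add: Ind_def independent_set_def)

lemma alpha_eq: "indep_number V E = Max (card ` Ind)"
  unfolding indep_number_def Ind_def by (simp add: image_def setcompr_eq_image)

lemma card_le_alpha: "S \<in> Ind \<Longrightarrow> card S \<le> indep_number V E"
  unfolding alpha_eq using finite_Ind by simp

lemma alpha_attained: "\<exists>S\<in>Ind. card S = indep_number V E"
proof -
  have "Max (card ` Ind) \<in> card ` Ind"
    using finite_Ind empty_Ind by (intro Max_in) auto
  then show ?thesis unfolding alpha_eq by auto
qed

lemma NS_iff: "pkeys m \<subseteq> V \<Longrightarrow> (\<not> NS E m) \<longleftrightarrow> pkeys m \<in> Ind"
proof -
  assume m: "pkeys m \<subseteq> V"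
  have "NS E m \<longleftrightarrow> (\<exists>u\<in>pkeys m. \<exists>v\<in>pkeys m. {u,v} \<in> E)"
  proof
    assume "NS E m"
    then obtain e where e: "e \<in> E" "e \<subseteq> pkeys m" by (auto simp: NS_def)
    then obtain u v where "e = {u,v}" using G unfolding simple_graph_def by blast
    then show "\<exists>u\<in>pkeys m. \<exists>v\<in>pkeys m. {u,v} \<in> E" using e by blast
  next
    assume "\<exists>u\<in>pkeys m. \<exists>v\<in>pkeys m. {u,v} \<in> E"
    then obtain u v where uv: "u \<in> pkeys m" "v \<in> pkeys m" "{u,v} \<in> E" by blast
    show "NS E m" unfolding NS_def
      by (rule bexI[of _ "{u,v}"]) (use uv in auto)
  qed
  moreover have "pkeys m \<in> Ind \<longleftrightarrow> (\<forall>u\<in>pkeys m. \<forall>v\<in>pkeys m. {u,v} \<notin> E)"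
    using m by (simp add: Ind_def independent_set_def)
  ultimately show ?thesis by blast
qed

lemma hf_sum: "hilbert_fun TYPE('k::field) V E i = (\<Sum>S\<in>Ind. cnt S i)"
proof -
  have eq: "{m\<in>Mon V i. \<not> NS E m} = (\<Union>S\<in>Ind. {m. pkeys m = S \<and> mon_deg m = i})"
  proof
    show "{m\<in>Mon V i. \<not> NS E m} \<subseteq> (\<Union>S\<in>Ind. {m. pkeys m = S \<and> mon_deg m = i})"
      using NS_iff by (auto simp: Mon_def)
    show "(\<Union>S\<in>Ind. {m. pkeys m = S \<and> mon_deg m = i}) \<subseteq> {m\<in>Mon V i. \<not> NS E m}"
      using NS_iff Ind_sub by (auto simp: Mon_def)
  qed
  have "hilbert_fun TYPE('k::field) V E i = card (\<Union>S\<in>Ind. {m. pkeys m = S \<and> mon_deg m = i})"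
    using hilbert_fun_eq[OF G, where 'k='k] eq by simp
  also have "\<dots> = (\<Sum>S\<in>Ind. cnt S i)"
    unfolding cnt_def
    by (rule card_UN_disjoint) (auto simp: finite_Ind finite_In finite_cnt_set)
  finally show ?thesis .
qed

lemma HS_sum: "hilbert_series TYPE('k::field) V E = (\<Sum>S\<in>Ind. Fc S)"
  by (rule fps_ext) (simp add: hilbert_series_def fps_sum_nth Fc_def hf_sum)

definition "Np = (\<Sum>S\<in>Ind. [:0,1:] ^ card S * [:1,-1:] ^ (indep_number V E - card S) :: int poly)"

lemma fps_Np: "fps_of_poly Np = hilbert_series TYPE('k::field) V E * (1 - fps_X) ^ indep_number V E"
proof -
  let ?a = "indep_number V E"
  have "hilbert_series TYPE('k::field) V E * (1 - fps_X) ^ ?a = (\<Sum>S\<in>Ind. Fc S * (1 - fps_X) ^ ?a)"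
    by (simp add: HS_sum sum_distrib_right)
  also have "\<dots> = (\<Sum>S\<in>Ind. fps_X ^ card S * (1 - fps_X) ^ (?a - card S))"
  proof (rule sum.cong[OF refl])
    fix S assume S: "S \<in> Ind"
    have "(1 - fps_X :: int fps) ^ ?a = (1 - fps_X) ^ card S * (1 - fps_X) ^ (?a - card S)"
      using card_le_alpha[OF S] by (simp flip: power_add)
    then show "Fc S * (1 - fps_X) ^ ?a = fps_X ^ card S * (1 - fps_X) ^ (?a - card S)"
      using Fc_main[OF finite_In[OF S]] by (metis mult.assoc)
  qed
  also have "\<dots> = fps_of_poly Np"
    by (simp add: Np_def fps_of_poly_sum fps_of_poly_mult fps_of_poly_power fps_q)
  finally show ?thesis by simp
qed

lemma poly_Np_pos: "poly Np 1 > 0"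
proof -
  obtain S0 where S0: "S0 \<in> Ind" "card S0 = indep_number V E" using alpha_attained by blast
  have "poly Np 1 = (\<Sum>S\<in>Ind. (0::int) ^ (indep_number V E - card S))"
    by (simp add: Np_def poly_sum poly_power)
  also have "\<dots> \<ge> (0::int) ^ (indep_number V E - card S0)"
    by (rule member_le_sum) (use S0 finite_Ind in auto)
  finally show ?thesis using S0 by simp
qed

lemma Np_nz: "Np \<noteq> 0" using poly_Np_pos by auto

lemma degree_Np: "degree Np \<le> indep_number V E"
  unfolding Np_def
proof (rule degree_sum_le)
  fix S assume S: "S \<in> Ind"
  show "degree ([:0,1:] ^ card S * [:1,-1:] ^ (indep_number V E - card S) :: int poly) \<le> indep_number V E"
    using poly_term_degree[of "card S" "indep_number V E - card S"] card_le_alpha[OF S] by simp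
qed (rule finite_Ind)

lemma coeff_Np: "coeff Np (indep_number V E) = (\<Sum>S\<in>Ind. (-1::int) ^ (indep_number V E - card S))"
proof -
  have "coeff Np (indep_number V E) = (\<Sum>S\<in>Ind. coeff ([:0,1:] ^ card S * [:1,-1:] ^ (indep_number V E - card S) :: int poly) (card S + (indep_number V E - card S)))"
    unfolding Np_def coeff_sum using card_le_alpha by (intro sum.cong) auto
  then show ?thesis by (simp only: poly_term_coeff)
qed


lemma sign_split: "j \<le> a \<Longrightarrow> (-1::int) ^ (a - j) = (-1) ^ a * (-1) ^ j"
proof -
  assume "j \<le> a"
  then obtain k where a: "a = j + k" using le_Suc_ex by blast
  have "(-1::int) ^ a * (-1) ^ j = (-1) ^ k * ((-1) ^ j * (-1) ^ j)"
    unfolding a power_add by (simp only: ac_simps)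
  then show ?thesis using a by simp
qed

lemma g0: "num_indep V E 0 = 1"
proof -
  have "{S. independent_set V E S \<and> card S = 0} = {{}}"
  proof -
    have "S = {}" if "independent_set V E S" "card S = 0" for S
      using that finite_In by (auto simp: Ind_def)
    then show ?thesis by (auto simp: independent_set_def)
  qed
  then show ?thesis by (simp add: num_indep_def)
qed

lemma coeff_Np_g:
  "coeff Np (indep_number V E) = (-1) ^ indep_number V E *
     (1 - (\<Sum>j=1..indep_number V E. (-1::int) ^ (j - 1) * int (num_indep V E j)))"
proof -
  let ?a = "indep_number V E"
  have "coeff Np ?a = (\<Sum>S\<in>Ind. (-1::int) ^ (?a - card S))" by (rule coeff_Np)
  also have "\<dots> = (\<Sum>j\<in>{0..?a}. \<Sum>S\<in>{S\<in>Ind. card S = j}. (-1::int) ^ (?a - card S))"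
    by (rule sum.group[symmetric]) (use finite_Ind card_le_alpha in auto)
  also have "\<dots> = (\<Sum>j\<in>{0..?a}. int (num_indep V E j) * (-1) ^ (?a - j))"
  proof (rule sum.cong[OF refl])
    fix j
    have "(\<Sum>S\<in>{S\<in>Ind. card S = j}. (-1::int) ^ (?a - card S)) = (\<Sum>S\<in>{S\<in>Ind. card S = j}. (-1::int) ^ (?a - j))"
      by (rule sum.cong) auto
    also have "\<dots> = int (card {S\<in>Ind. card S = j}) * (-1) ^ (?a - j)" by simp
    finally have "(\<Sum>S\<in>{S\<in>Ind. card S = j}. (-1::int) ^ (?a - card S)) = int (card {S\<in>Ind. card S = j}) * (-1) ^ (?a - j)" .
    moreover have "{S\<in>Ind. card S = j} = {S. independent_set V E S \<and> card S = j}" by (auto simp: Ind_def)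
    ultimately show "(\<Sum>S\<in>{S\<in>Ind. card S = j}. (-1::int) ^ (?a - card S)) = int (num_indep V E j) * (-1) ^ (?a - j)"
      by (simp add: num_indep_def)
  qed
  also have "\<dots> = (-1) ^ ?a * (\<Sum>j\<in>{0..?a}. (-1) ^ j * int (num_indep V E j))"
    by (simp add: sum_distrib_left sign_split ac_simps)
  also have "(\<Sum>j\<in>{0..?a}. (-1::int) ^ j * int (num_indep V E j))
      = 1 + (\<Sum>j\<in>{1..?a}. (-1) ^ j * int (num_indep V E j))"
    by (subst sum.atLeast_Suc_atMost) (simp_all add: g0)
  also have "(\<Sum>j\<in>{1..?a}. (-1::int) ^ j * int (num_indep V E j))
      = - (\<Sum>j\<in>{1..?a}. (-1) ^ (j - 1) * int (num_indep V E j))"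
  proof -
    have "(\<Sum>j\<in>{1..?a}. (-1::int) ^ j * int (num_indep V E j))
        = (\<Sum>j\<in>{1..?a}. - ((-1) ^ (j - 1) * int (num_indep V E j)))"
    proof (rule sum.cong[OF refl])
      fix j :: nat assume "j \<in> {1..?a}"
      then have "j = Suc (j - 1)" by auto
      then have "(-1::int) ^ j = - ((-1) ^ (j - 1))" by (metis power_Suc mult_minus1)
      then show "(-1::int) ^ j * int (num_indep V E j) = - ((-1) ^ (j - 1) * int (num_indep V E j))"
        by simp
    qed
    then show ?thesis by (simp add: sum_negf)
  qed
  finally show ?thesis by simp
qed

lemma fps_q_pow: "fps_of_poly ([:1,-1:] ^ n :: int poly) = (1 - fps_X) ^ n"
  by (simp add: fps_of_poly_power fps_q)

lemma q_not_unit: "\<not> is_unit ([:1,-1:] :: int poly)"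
  by (auto simp: is_unit_poly_iff)

lemma q_dvd_poly1: "[:1,-1:] dvd (p :: int poly) \<Longrightarrow> poly p 1 = 0"
  by (auto elim!: dvdE)

lemma coprime_Np: "coprime Np ([:1,-1:] ^ indep_number V E)"
proof -
  have "coprime Np [:1,-1:]"
  proof (rule coprimeI)
    fix c assume cN: "c dvd Np" and cq: "c dvd [:1,-1:]"
    then obtain r where r: "[:1,-1:] = c * r" by (auto elim: dvdE)
    have "poly c 1 * poly r 1 = 0" using arg_cong[OF r, of "\<lambda>p. poly p 1"] by simp
    moreover have "poly c 1 \<noteq> 0"
    proof
      assume "poly c 1 = 0"
      then have "[:-1,1:] dvd c" by (simp add: poly_eq_0_iff_dvd)
      then have "[:-1,1:] dvd Np" using cN dvd_trans by blast
      then have "poly Np 1 = 0" by (auto elim!: dvdE)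
      then show False using poly_Np_pos by simp
    qed
    ultimately have "poly r 1 = 0" by simp
    then have "[:-1,1:] dvd r" by (simp add: poly_eq_0_iff_dvd)
    then obtain t where t: "r = [:-1,1:] * t" by (auto elim: dvdE)
    have "c * r = [:-1,1:] * (c * t)" unfolding t by (rule mult.left_commute)
    with r have e1: "[:1,-1:] = [:-1,1:] * (c * t)" by (rule trans)
    have e2: "[:-1,1:] * (-1) = ([:1,-1:] :: int poly)" by simp
    have "[:-1,1:] * (c * t) = [:-1,1:] * (-1 :: int poly)" using e1 e2 by simp
    then have "c * t = -1" by (subst (asm) mult_left_cancel) simp_all
    then have "c * (- t) = 1" by simp
    then show "is_unit c" by (metis dvdI)
  qed
  then show ?thesis by simp
qed

lemma numerator_eq: "hilbert_numerator TYPE('k::field) V E = Np"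
  unfolding hilbert_numerator_def
proof (rule the_equality)
  let ?a = "indep_number V E"
  let ?H = "hilbert_series TYPE('k::field) V E"
  show "\<exists>d. fps_of_poly Np = ?H * (1 - fps_X) ^ d \<and> coprime Np ([:1, - 1:] ^ d)"
    by (rule exI[of _ "indep_number V E"], rule conjI, rule fps_Np[where 'k='k], rule coprime_Np)
  fix h assume "\<exists>d. fps_of_poly h = ?H * (1 - fps_X) ^ d \<and> coprime h ([:1, - 1:] ^ d)"
  then obtain d where hd: "fps_of_poly h = ?H * (1 - fps_X) ^ d" and cop: "coprime h ([:1, - 1:] ^ d)"
    by blast
  show "h = Np"
  proof (cases "?a \<le> d")
    case True
    then obtain k where k: "d = ?a + k" using le_Suc_ex by blast
    have "fps_of_poly (Np * [:1,-1:] ^ k) = ?H * (1 - fps_X) ^ ?a * (1 - fps_X) ^ k"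
      by (simp only: fps_of_poly_mult fps_q_pow fps_Np[where 'k='k])
    also have "\<dots> = fps_of_poly h" by (simp only: hd k power_add mult.assoc)
    finally have "fps_of_poly h = fps_of_poly (Np * [:1,-1:] ^ k)" by simp
    then have h: "h = Np * [:1,-1:] ^ k" by (simp add: fps_of_poly_eq_iff)
    show ?thesis
    proof (cases k)
      case 0 then show ?thesis using h by simp
    next
      case (Suc k')
      have "h = [:1,-1:] * (Np * [:1,-1:] ^ k')"
        unfolding h Suc power_Suc by (simp only: mult.left_commute)
      then have "[:1,-1:] dvd h" by (rule dvdI)
      moreover have "[:1,-1:] dvd ([:1,-1:] ^ d :: int poly)"
      proof -
        have "([:1,-1:] ^ d :: int poly) = [:1,-1:] * [:1,-1:] ^ (?a + k')"
          by (simp only: k Suc add_Suc_right power_Suc)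
        then show ?thesis by (rule dvdI)
      qed
      ultimately have "is_unit ([:1,-1:] :: int poly)" using cop coprime_common_divisor by blast
      then show ?thesis using q_not_unit by blast
    qed
  next
    case False
    then have "d < ?a" by simp
    then obtain k0 where "?a = Suc (d + k0)" using less_imp_Suc_add by blast
    then obtain k where k: "?a = d + Suc k" by simp
    have "fps_of_poly (h * [:1,-1:] ^ Suc k) = ?H * (1 - fps_X) ^ d * (1 - fps_X) ^ Suc k"
      by (simp only: fps_of_poly_mult fps_q_pow hd)
    also have "\<dots> = fps_of_poly Np" by (simp only: fps_Np[where 'k='k] k power_add mult.assoc)
    finally have "h * [:1,-1:] ^ Suc k = Np" by (simp add: fps_of_poly_eq_iff)
    then have "Np = [:1,-1:] * (h * [:1,-1:] ^ k)"
      unfolding power_Suc by (simp only: mult.left_commute)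
    then have "[:1,-1:] dvd Np" by (rule dvdI)
    then have "poly Np 1 = 0" by (rule q_dvd_poly1)
    then show ?thesis using poly_Np_pos by simp
  qed
qed

end

theorem theorem3p2:
  fixes V :: "'v set" and E :: "'v set set"
  assumes "simple_graph V E"
  shows "degree (hilbert_numerator TYPE('k::field) V E) = indep_number V E
     \<longleftrightarrow> (\<Sum>j=1..indep_number V E. (-1::int) ^ (j - 1) * int (num_indep V E j)) \<noteq> 1"
proof -
  let ?a = "indep_number V E"
  let ?g = "(\<Sum>j=1..indep_number V E. (-1::int) ^ (j - 1) * int (num_indep V E j))"
  have N: "hilbert_numerator TYPE('k::field) V E = Np V E" by (rule numerator_eq[OF assms])
  have c: "coeff (Np V E) ?a = (-1) ^ ?a * (1 - ?g)" by (rule coeff_Np_g[OF assms])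
  have dle: "degree (Np V E) \<le> ?a" by (rule degree_Np[OF assms])
  have nz: "Np V E \<noteq> 0" by (rule Np_nz[OF assms])
  have "degree (Np V E) = ?a \<longleftrightarrow> coeff (Np V E) ?a \<noteq> 0"
  proof
    assume "degree (Np V E) = ?a"
    then show "coeff (Np V E) ?a \<noteq> 0" using nz by (metis leading_coeff_0_iff)
  next
    assume "coeff (Np V E) ?a \<noteq> 0"
    then have "?a \<le> degree (Np V E)" by (rule le_degree)
    then show "degree (Np V E) = ?a" using dle by simp
  qed
  also have "\<dots> \<longleftrightarrow> ?g \<noteq> 1" unfolding c by simp
  finally show ?thesis unfolding N .
qed


end
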